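(* Let $\beta>0$, $\lambda_p,\lambda_k\in\mathbb R$, and let $s_1,\dots,s_n\in\{\pm1\}$ be a nonconstant sign pattern, $S_\pm=\{i:s_i=\pm1\}$, $n_\pm=|S_\pm|$. Let $K^*_{ij}=a_+$ for $i,j\in S_+$, $b_+$ for $i\in S_+,j\in S_-$, $b_-$ for $i\in S_-,j\in S_+$, $a_-$ for $i,j\in S_-$, where \[ a_+=\frac{e^{\beta\lambda_p}}{n_+e^{\beta\lambda_p}+n_-e^{-\beta\lambda_p}},\ b_+=\frac{e^{-\beta\lambda_p}}{n_+e^{\beta\lambda_p}+n_-e^{-\beta\lambda_p}},\ a_-=\frac{e^{\beta\lambda_p}}{n_-e^{\beta\lambda_p}+n_+e^{-\beta\lambda_p}},\ b_-=\frac{e^{-\beta\lambda_p}}{n_-e^{\beta\lambda_p}+n_+e^{-\beta\lambda_p}}, \] and let $\gamma_i=\lambda_ps_i\sum_jK^*_{ij}s_j$ (so $\gamma_i=\gamma_+:=\lambda_p(n_+a_+-n_-b_+)$ on $S_+$ and $\gamma_i=\gamma_-:=\lambda_p(n_-a_--n_+b_-)$ on $S_-$). Define $L_k:\mathbb R^n\to\mathbb R^n$ by $(L_kz)_i=-\gamma_iz_i+\lambda_k\sum_{j=1}^nK^*_{ij}z_j$. Then $\mathbb R^n=V_+\oplus V_-\oplus V_{\mathrm{mean}}$, where \[ V_\pm=\Big\{z: z_i=0\ \text{for } i\in S_\mp,\ \sum_{i\in S_\pm}z_i=0\Big\},\qquad V_{\mathrm{mean}}=\{z: z\text{ is constant on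 }S_+\text{ and constant on }S_-\}, \] and each of $V_+,V_-,V_{\mathrm{mean}}$ is invariant under $L_k$.
   Context: $L_k$ is the modewise (transverse direction $e_k$, $k\ne p$) linearization of the symmetric self-attention dynamics at the sign-split pure-mode equilibrium $x_i^*=s_ie_p$, where $\lambda_p,\lambda_k$ are eigenvalues of the symmetric interaction matrix. *)

theory Defs
  imports "HOL-Analysis.Analysis"
begin

text \<open>Sign pattern s :: 'n => real with values in {1,-1}; index type 'n is {1..n}.\<close>

definition Splus :: "('n::finite \<Rightarrow> real) \<Rightarrow> 'n set" where
  "Splus s = {i. s i = 1}"

definition Sminus :: "('n::finite \<Rightarrow> real) \<Rightarrow> 'n set" where
  "Sminus s = {i. s i = -1}"

definition npos :: "('n::finite \<Rightarrow> real) \<Rightarrow> real" where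
  "npos s = real (card (Splus s))"

definition nneg :: "('n::finite \<Rightarrow> real) \<Rightarrow> real" where
  "nneg s = real (card (Sminus s))"

definition apos :: "real \<Rightarrow> real \<Rightarrow> ('n::finite \<Rightarrow> real) \<Rightarrow> real" where
  "apos \<beta> lp s = exp (\<beta> * lp) / (npos s * exp (\<beta> * lp) + nneg s * exp (- \<beta> * lp))"

definition bpos :: "real \<Rightarrow> real \<Rightarrow> ('n::finite \<Rightarrow> real) \<Rightarrow> real" where
  "bpos \<beta> lp s = exp (- \<beta> * lp) / (npos s * exp (\<beta> * lp) + nneg s * exp (- \<beta> * lp))"

definition aneg :: "real \<Rightarrow> real \<Rightarrow> ('n::finite \<Rightarrow> real) \<Rightarrow> real" where
  "aneg \<beta> lp s = exp (\<beta> * lp) / (nneg s * exp (\<beta> * lp) + npos s * exp (- \<beta> * lp))"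

definition bneg :: "real \<Rightarrow> real \<Rightarrow> ('n::finite \<Rightarrow> real) \<Rightarrow> real" where
  "bneg \<beta> lp s = exp (- \<beta> * lp) / (nneg s * exp (\<beta> * lp) + npos s * exp (- \<beta> * lp))"

definition Kstar :: "real \<Rightarrow> real \<Rightarrow> ('n::finite \<Rightarrow> real) \<Rightarrow> 'n \<Rightarrow> 'n \<Rightarrow> real" where
  "Kstar \<beta> lp s i j =
     (if i \<in> Splus s then (if j \<in> Splus s then apos \<beta> lp s else bpos \<beta> lp s)
      else (if j \<in> Splus s then bneg \<beta> lp s else aneg \<beta> lp s))"

definition gam :: "real \<Rightarrow> real \<Rightarrow> ('n::finite \<Rightarrow> real) \<Rightarrow> 'n \<Rightarrow> real" where
  "gam \<beta> lp s i = lp * s i * (\<Sum>j\<in>UNIV. Kstar \<beta> lp s i j * s j)"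

definition Lk :: "real \<Rightarrow> real \<Rightarrow> real \<Rightarrow> ('n::finite \<Rightarrow> real) \<Rightarrow> real^'n \<Rightarrow> real^'n" where
  "Lk \<beta> lp lk s z = (\<chi> i. - gam \<beta> lp s i * z $ i + lk * (\<Sum>j\<in>UNIV. Kstar \<beta> lp s i j * z $ j))"

definition Vplus :: "('n::finite \<Rightarrow> real) \<Rightarrow> (real^'n) set" where
  "Vplus s = {z. (\<forall>i\<in>Sminus s. z $ i = 0) \<and> (\<Sum>i\<in>Splus s. z $ i) = 0}"

definition Vminus :: "('n::finite \<Rightarrow> real) \<Rightarrow> (real^'n) set" where
  "Vminus s = {z. (\<forall>i\<in>Splus s. z $ i = 0) \<and> (\<Sum>i\<in>Sminus s. z $ i) = 0}"

definition Vmean :: "('n::finite \<Rightarrow> real) \<Rightarrow> (real^'n) set" where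
  "Vmean s = {z. (\<forall>i\<in>Splus s. \<forall>j\<in>Splus s. z $ i = z $ j) \<and>
                 (\<forall>i\<in>Sminus s. \<forall>j\<in>Sminus s. z $ i = z $ j)}"

end

theory Submission
  imports Defs
begin

lemma subsp_helper:
  "subspace {z::real^'n::finite. (\<forall>i\<in>B. z $ i = 0) \<and> (\<Sum>i\<in>A. z $ i) = 0}"
proof (rule subspaceI)
  show "0 \<in> {z::real^'n::finite. (\<forall>i\<in>B. z $ i = 0) \<and> (\<Sum>i\<in>A. z $ i) = 0}" by simp
next
  fix x y :: "real^'n" assume "x \<in> {z::real^'n. (\<forall>i\<in>B. z $ i = 0) \<and> (\<Sum>i\<in>A. z $ i) = 0}" "y \<in> {z::real^'n. (\<forall>i\<in>B. z $ i = 0) \<and> (\<Sum>i\<in>A. z $ i) = 0}"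
  then show "x + y \<in> {z::real^'n. (\<forall>i\<in>B. z $ i = 0) \<and> (\<Sum>i\<in>A. z $ i) = 0}"
    by (simp add: sum.distrib)
next
  fix c and x :: "real^'n"
  assume "x \<in> {z::real^'n. (\<forall>i\<in>B. z $ i = 0) \<and> (\<Sum>i\<in>A. z $ i) = 0}"
  then have a: "\<forall>i\<in>B. x $ i = 0" "(\<Sum>i\<in>A. x $ i) = 0" by auto
  have "(\<Sum>i\<in>A. (c *\<^sub>R x) $ i) = c * (\<Sum>i\<in>A. x $ i)" by (simp add: sum_distrib_left)
  then show "c *\<^sub>R x \<in> {z::real^'n. (\<forall>i\<in>B. z $ i = 0) \<and> (\<Sum>i\<in>A. z $ i) = 0}" using a by simp
qed

lemma subsp_mean:
  "subspace {z::real^'n::finite. (\<forall>i\<in>A. \<forall>j\<in>A. z $ i = z $ j) \<and> (\<forall>i\<in>B. \<forall>j\<in>B. z $ i = z $ j)}"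
proof (rule subspaceI)
  show "0 \<in> {z::real^'n::finite. (\<forall>i\<in>A. \<forall>j\<in>A. z $ i = z $ j) \<and> (\<forall>i\<in>B. \<forall>j\<in>B. z $ i = z $ j)}" by simp
next
  fix x y :: "real^'n"
  assume "x \<in> {z::real^'n::finite. (\<forall>i\<in>A. \<forall>j\<in>A. z $ i = z $ j) \<and> (\<forall>i\<in>B. \<forall>j\<in>B. z $ i = z $ j)}"
     "y \<in> {z::real^'n::finite. (\<forall>i\<in>A. \<forall>j\<in>A. z $ i = z $ j) \<and> (\<forall>i\<in>B. \<forall>j\<in>B. z $ i = z $ j)}"
  then show "x + y \<in> {z::real^'n::finite. (\<forall>i\<in>A. \<forall>j\<in>A. z $ i = z $ j) \<and> (\<forall>i\<in>B. \<forall>j\<in>B. z $ i = z $ j)}"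
    unfolding mem_Collect_eq vector_add_component by metis
next
  fix c and x :: "real^'n"
  assume "x \<in> {z::real^'n::finite. (\<forall>i\<in>A. \<forall>j\<in>A. z $ i = z $ j) \<and> (\<forall>i\<in>B. \<forall>j\<in>B. z $ i = z $ j)}"
  then show "c *\<^sub>R x \<in> {z::real^'n::finite. (\<forall>i\<in>A. \<forall>j\<in>A. z $ i = z $ j) \<and> (\<forall>i\<in>B. \<forall>j\<in>B. z $ i = z $ j)}"
    unfolding mem_Collect_eq vector_scaleR_component by metis
qed

theorem lemmaA2:
  fixes \<beta> lp lk :: real and s :: "'n::finite \<Rightarrow> real"
  assumes "\<beta> > 0"
    and "\<forall>i. s i = 1 \<or> s i = -1"
    and "\<exists>i j. s i \<noteq> s j"
  shows "subspace (Vplus s) \<and> subspace (Vminus s) \<and> subspace (Vmean s)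
    \<and> (\<forall>z::real^'n. \<exists>!(u, v, w). u \<in> Vplus s \<and> v \<in> Vminus s \<and> w \<in> Vmean s \<and> z = u + v + w)
    \<and> Lk \<beta> lp lk s ` Vplus s \<subseteq> Vplus s
    \<and> Lk \<beta> lp lk s ` Vminus s \<subseteq> Vminus s
    \<and> Lk \<beta> lp lk s ` Vmean s \<subseteq> Vmean s"
proof -
  define P where "P = Splus s"
  have M: "Sminus s = - P"
    using assms(2) by (auto simp: P_def Splus_def Sminus_def)
  have sP: "\<And>i. i \<in> P \<Longrightarrow> s i = 1" and sM: "\<And>i. i \<notin> P \<Longrightarrow> s i = -1"
    using assms(2) by (auto simp: P_def Splus_def)
  have Kc: "\<And>i i'. (i \<in> P \<longleftrightarrow> i' \<in> P) \<Longrightarrow> Kstar \<beta> lp s i = Kstar \<beta> lp s i'"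
    by (auto simp: Kstar_def P_def fun_eq_iff)
  have sc: "s i = s i'" if "i \<in> P \<longleftrightarrow> i' \<in> P" for i i'
    using that by (cases "i \<in> P") (simp_all add: sP sM)
  have gc: "gam \<beta> lp s i = gam \<beta> lp s i'" if "i \<in> P \<longleftrightarrow> i' \<in> P" for i i'
    unfolding gam_def using Kc[OF that] sc[OF that] by simp
  have split: "\<And>f::'n \<Rightarrow> real. (\<Sum>j\<in>UNIV. f j) = (\<Sum>j\<in>P. f j) + (\<Sum>j\<in>-P. f j)"
    using sum.Int_Diff[of UNIV _ P] by (simp add: Compl_eq_Diff_UNIV)
  have VP: "Vplus s = {z. (\<forall>i\<in>-P. z $ i = 0) \<and> (\<Sum>i\<in>P. z $ i) = 0}"
    unfolding Vplus_def M P_def ..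
  have VM: "Vminus s = {z. (\<forall>i\<in>P. z $ i = 0) \<and> (\<Sum>i\<in>-P. z $ i) = 0}"
    unfolding Vminus_def M P_def ..
  have VW: "Vmean s = {z. (\<forall>i\<in>P. \<forall>j\<in>P. z $ i = z $ j) \<and> (\<forall>i\<in>-P. \<forall>j\<in>-P. z $ i = z $ j)}"
    unfolding Vmean_def M P_def ..
  have s1: "subspace (Vplus s)"
    unfolding VP by (rule subsp_helper)
  have s2: "subspace (Vminus s)"
    unfolding VM by (rule subsp_helper)
  have s3: "subspace (Vmean s)"
    unfolding VW by (rule subsp_mean)
  have cs: "\<And>w::real^'n. \<And>A i. i \<in> A \<Longrightarrow> (\<forall>j\<in>A. w $ i = w $ j) \<Longrightarrow> (\<Sum>j\<in>A. w $ j) = real (card A) * w $ i"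
  proof -
    fix w :: "real^'n" and A i assume "i \<in> A" "\<forall>j\<in>A. w $ i = w $ j"
    then have "(\<Sum>j\<in>A. w $ j) = (\<Sum>j\<in>A. w $ i)"
      by (metis (no_types, lifting) sum.cong)
    then show "(\<Sum>j\<in>A. w $ j) = real (card A) * w $ i" by simp
  qed
  define cP where "cP z = (\<Sum>i\<in>P. z $ i) / real (card P)" for z :: "real^'n"
  define cM where "cM z = (\<Sum>i\<in>-P. z $ i) / real (card (-P))" for z :: "real^'n"
  define uf where "uf z = (\<chi> i. if i \<in> P then z $ i - cP z else 0)" for z :: "real^'n"
  define vf where "vf z = (\<chi> i. if i \<in> P then 0 else z $ i - cM z)" for z :: "real^'n"
  define wf where "wf z = (\<chi> i. if i \<in> P then cP z else cM z)" for z :: "real^'n"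
  have uniq: "u = uf z \<and> v = vf z \<and> w = wf z"
    if h: "u \<in> Vplus s" "v \<in> Vminus s" "w \<in> Vmean s" "z = u + v + w" for u v w z
  proof -
    have wP: "w $ i = cP z" if "i \<in> P" for i
    proof -
      have "(\<Sum>j\<in>P. z $ j) = (\<Sum>j\<in>P. u $ j) + (\<Sum>j\<in>P. v $ j) + (\<Sum>j\<in>P. w $ j)"
        using h(4) by (simp add: sum.distrib)
      also have "\<dots> = real (card P) * w $ i"
      proof -
        have "(\<Sum>j\<in>P. u $ j) = 0" using h(1) unfolding VP VM by auto
        moreover have "(\<Sum>j\<in>P. v $ j) = 0" using h(2) unfolding VP VM by auto
        moreover have "(\<Sum>j\<in>P. w $ j) = real (card P) * w $ i"
        proof (rule cs)
          show "i \<in> P" by fact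
          show "\<forall>j\<in>P. w $ i = w $ j" using h(3) that unfolding VW mem_Collect_eq by blast
        qed
        ultimately show ?thesis by simp
      qed
      finally have "(\<Sum>j\<in>P. z $ j) = real (card P) * w $ i" .
      moreover have "real (card P) \<noteq> 0" using that by (auto simp: card_eq_0_iff)
      ultimately show ?thesis unfolding cP_def by simp
    qed
    have wM: "w $ i = cM z" if "i \<in> -P" for i
    proof -
      have "(\<Sum>j\<in>-P. z $ j) = (\<Sum>j\<in>-P. u $ j) + (\<Sum>j\<in>-P. v $ j) + (\<Sum>j\<in>-P. w $ j)"
        using h(4) by (simp add: sum.distrib)
      also have "\<dots> = real (card (-P)) * w $ i"
      proof -
        have "(\<Sum>j\<in>-P. u $ j) = 0" using h(1) unfolding VP VM by auto
        moreover have "(\<Sum>j\<in>-P. v $ j) = 0" using h(2) unfolding VP VM by auto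
        moreover have "(\<Sum>j\<in>-P. w $ j) = real (card (-P)) * w $ i"
        proof (rule cs)
          show "i \<in> -P" by fact
          show "\<forall>j\<in>-P. w $ i = w $ j" using h(3) that unfolding VW mem_Collect_eq by blast
        qed
        ultimately show ?thesis by simp
      qed
      finally have "(\<Sum>j\<in>-P. z $ j) = real (card (-P)) * w $ i" .
      moreover have "real (card (-P)) \<noteq> 0" using that by (auto simp: card_eq_0_iff)
      ultimately show ?thesis unfolding cM_def by simp
    qed
    have ww: "w = wf z" unfolding wf_def using wP wM by (auto simp: vec_eq_iff)
    have zc: "\<forall>i. z $ i = u $ i + v $ i + w $ i" using h(4) by simp
    moreover have "u = uf z" unfolding uf_def using wP h(1,2) zc unfolding VP VM
      by (auto simp: vec_eq_iff)
    moreover have "v = vf z" unfolding vf_def using wM h(1,2) zc unfolding VP VM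
      by (auto simp: vec_eq_iff)
    ultimately show ?thesis using ww by blast
  qed
  have ex: "uf z \<in> Vplus s \<and> vf z \<in> Vminus s \<and> wf z \<in> Vmean s \<and> z = uf z + vf z + wf z" for z
  proof -
    have a: "(\<Sum>i\<in>P. z $ i - cP z) = 0"
      by (simp add: sum_subtractf cP_def)
    have b: "(\<Sum>i\<in>-P. z $ i - cM z) = 0"
      by (simp add: sum_subtractf cM_def)
    show ?thesis unfolding VP VM VW uf_def vf_def wf_def using a b
      by (auto simp: vec_eq_iff)
  qed
  have d: "\<forall>z::real^'n. \<exists>!(u, v, w). u \<in> Vplus s \<and> v \<in> Vminus s \<and> w \<in> Vmean s \<and> z = u + v + w"
  proof
    fix z :: "real^'n"
    show "\<exists>!(u, v, w). u \<in> Vplus s \<and> v \<in> Vminus s \<and> w \<in> Vmean s \<and> z = u + v + w"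
    proof (rule ex1I[of _ "(uf z, vf z, wf z)"])
      show "case (uf z, vf z, wf z) of (u, v, w) \<Rightarrow> u \<in> Vplus s \<and> v \<in> Vminus s \<and> w \<in> Vmean s \<and> z = u + v + w"
        using ex by simp
    next
      fix x assume "case x of (u, v, w) \<Rightarrow> u \<in> Vplus s \<and> v \<in> Vminus s \<and> w \<in> Vmean s \<and> z = u + v + w"
      then show "x = (uf z, vf z, wf z)" using uniq by (cases x) auto
    qed
  qed
  have KP: "(\<Sum>j\<in>UNIV. Kstar \<beta> lp s i j * z $ j) = 0" if "z \<in> Vplus s" for i z
  proof -
    have "(\<Sum>j\<in>UNIV. Kstar \<beta> lp s i j * z $ j) = (\<Sum>j\<in>P. (if i \<in> P then apos \<beta> lp s else bneg \<beta> lp s) * z $ j)"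
      using that unfolding split VP by (simp add: Kstar_def P_def)
    also have "\<dots> = 0" using that unfolding VP by (simp add: sum_distrib_left[symmetric])
    finally show ?thesis .
  qed
  have KM: "(\<Sum>j\<in>UNIV. Kstar \<beta> lp s i j * z $ j) = 0" if "z \<in> Vminus s" for i z
  proof -
    have "(\<Sum>j\<in>UNIV. Kstar \<beta> lp s i j * z $ j) = (\<Sum>j\<in>-P. (if i \<in> P then bpos \<beta> lp s else aneg \<beta> lp s) * z $ j)"
      using that unfolding split VM by (simp add: Kstar_def P_def)
    also have "\<dots> = 0" using that unfolding VM by (simp add: sum_distrib_left[symmetric])
    finally show ?thesis .
  qed
  have gsum: "(\<Sum>i\<in>A. gam \<beta> lp s i * z $ i) = 0"
    if "(\<Sum>i\<in>A. z $ i) = 0" "A = P \<or> A = -P" for A z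
  proof (cases "A = {}")
    case True then show ?thesis by simp
  next
    case False
    then obtain i0 where i0: "i0 \<in> A" by blast
    have "(\<Sum>i\<in>A. gam \<beta> lp s i * z $ i) = (\<Sum>i\<in>A. gam \<beta> lp s i0 * z $ i)"
    proof (rule sum.cong[OF refl])
      fix i assume "i \<in> A"
      then have "i \<in> P \<longleftrightarrow> i0 \<in> P" using i0 that(2) by auto
      then show "gam \<beta> lp s i * z $ i = gam \<beta> lp s i0 * z $ i" using gc by metis
    qed
    also have "\<dots> = 0" using that(1) by (simp add: sum_distrib_left[symmetric])
    finally show ?thesis .
  qed
  have i1: "Lk \<beta> lp lk s ` Vplus s \<subseteq> Vplus s"
  proof clarify
    fix z assume z: "z \<in> Vplus s"
    have e: "Lk \<beta> lp lk s z $ i = - gam \<beta> lp s i * z $ i" for i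
      using KP[OF z] by (simp add: Lk_def)
    show "Lk \<beta> lp lk s z \<in> Vplus s"
      using z gsum[of z P] unfolding VP by (simp add: e sum_negf)
  qed
  have i2: "Lk \<beta> lp lk s ` Vminus s \<subseteq> Vminus s"
  proof clarify
    fix z assume z: "z \<in> Vminus s"
    have e: "Lk \<beta> lp lk s z $ i = - gam \<beta> lp s i * z $ i" for i
      using KM[OF z] by (simp add: Lk_def)
    show "Lk \<beta> lp lk s z \<in> Vminus s"
      using z gsum[of z "-P"] unfolding VM by (simp add: e sum_negf)
  qed
  have i3: "Lk \<beta> lp lk s ` Vmean s \<subseteq> Vmean s"
  proof clarify
    fix z assume z: "z \<in> Vmean s"
    have e: "Lk \<beta> lp lk s z $ i = Lk \<beta> lp lk s z $ i'" if "i \<in> P \<longleftrightarrow> i' \<in> P" for i i'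
    proof -
      have "z $ i = z $ i'" using z that unfolding VW mem_Collect_eq by (cases "i \<in> P") (blast, blast)
      then show ?thesis using gc[OF that] Kc[OF that] by (simp add: Lk_def)
    qed
    show "Lk \<beta> lp lk s z \<in> Vmean s"
      unfolding VW mem_Collect_eq using e by blast
  qed
  show ?thesis using s1 s2 s3 d i1 i2 i3 by blast
qed

end
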